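(* Let $P$ be a linear process. If $P \to P'$, then there is a name $a$ such that $a\notin\mathcal{N}(P')$, $\mathcal{N}(P')\cup\{a\} = \mathcal{N}(P)$, and $\mathrm{sync}(a,P)$ holds.
   Context: Processes: $P ::= \mathbf{0} \mid \alpha.P \mid P\,|\,Q$ where $\alpha$ is a name $a$ or a co-name $\bar a$ (with $\bar{\bar a}=a$). Structural congruence $\equiv$ is the smallest congruence with $P|\mathbf{0}\equiv P$, $P|Q\equiv Q|P$, $P|(Q|R)\equiv(P|Q)|R$. Reduction $\to$ is the smallest relation with $a.P\,|\,\bar a.Q\to P\,|\,Q$, closed under parallel contexts ($P\to P'$ implies $P|R\to P'|R$ and $R|P\to R|P'$) and under $\equiv$. A process is linear if each name occurs at most once as an input $a$ and at most once as an output $\bar a$. $\mathcal{N}(P)$ is the set of names occurring in $P$ (as $a$ or $\bar a$): $\mathcal{N}(\mathbf{0})=\emptyset$, $\mathcal{N}(a.P)=\mathcal{N}(\bar a.P)=\{a\}\cup\mathcal{N}(P)$, $\mathcal{N}(P|Q)=\mathcal{N}(P)\cup\mathcal{N}(Q)$. $\mathrm{sync}(a,P)$ holds iff there exist $P_1,P_2,P_3,P_4$ with $P\equiv P_1\,|\,a.P_2$ and $P\equiv P_3\,|\,\bar a.P_4$. *)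

theory Defs
  imports Main
begin

text \<open>Prefixes: a name a (input) or a co-name (output, written bar a).\<close>
datatype 'n act = In 'n | Out 'n

fun co :: "'n act \<Rightarrow> 'n act" where
  "co (In a) = Out a"
| "co (Out a) = In a"

datatype 'n proc = Nil | Pre "'n act" "'n proc" | Par "'n proc" "'n proc"

inductive scong :: "'n proc \<Rightarrow> 'n proc \<Rightarrow> bool" (infix "\<equiv>\<^sub>s" 50) where
  sc_unit: "Par P Nil \<equiv>\<^sub>s P"
| sc_comm: "Par P Q \<equiv>\<^sub>s Par Q P"
| sc_assoc: "Par P (Par Q R) \<equiv>\<^sub>s Par (Par P Q) R"
| sc_refl: "P \<equiv>\<^sub>s P"
| sc_sym: "P \<equiv>\<^sub>s Q \<Longrightarrow> Q \<equiv>\<^sub>s P"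
| sc_trans: "P \<equiv>\<^sub>s Q \<Longrightarrow> Q \<equiv>\<^sub>s R \<Longrightarrow> P \<equiv>\<^sub>s R"
| sc_pre: "P \<equiv>\<^sub>s Q \<Longrightarrow> Pre \<alpha> P \<equiv>\<^sub>s Pre \<alpha> Q"
| sc_parL: "P \<equiv>\<^sub>s Q \<Longrightarrow> Par P R \<equiv>\<^sub>s Par Q R"
| sc_parR: "P \<equiv>\<^sub>s Q \<Longrightarrow> Par R P \<equiv>\<^sub>s Par R Q"

inductive red :: "'n proc \<Rightarrow> 'n proc \<Rightarrow> bool" (infix "\<longmapsto>" 50) where
  red_comm: "Par (Pre \<alpha> P) (Pre (co \<alpha>) Q) \<longmapsto> Par P Q"
| red_parL: "P \<longmapsto> P' \<Longrightarrow> Par P R \<longmapsto> Par P' R"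
| red_parR: "P \<longmapsto> P' \<Longrightarrow> Par R P \<longmapsto> Par R P'"
| red_struct: "P \<equiv>\<^sub>s Q \<Longrightarrow> Q \<longmapsto> Q' \<Longrightarrow> Q' \<equiv>\<^sub>s P' \<Longrightarrow> P \<longmapsto> P'"

fun occ :: "'n act \<Rightarrow> 'n proc \<Rightarrow> nat" where
  "occ \<beta> Nil = 0"
| "occ \<beta> (Pre \<alpha> P) = (if \<alpha> = \<beta> then 1 else 0) + occ \<beta> P"
| "occ \<beta> (Par P Q) = occ \<beta> P + occ \<beta> Q"

definition linear :: "'n proc \<Rightarrow> bool" where
  "linear P \<longleftrightarrow> (\<forall>a. occ (In a) P \<le> 1 \<and> occ (Out a) P \<le> 1)"

fun actname :: "'n act \<Rightarrow> 'n" where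
  "actname (In a) = a"
| "actname (Out a) = a"

fun names :: "'n proc \<Rightarrow> 'n set" where
  "names Nil = {}"
| "names (Pre \<alpha> P) = insert (actname \<alpha>) (names P)"
| "names (Par P Q) = names P \<union> names Q"

definition sync :: "'n \<Rightarrow> 'n proc \<Rightarrow> bool" where
  "sync a P \<longleftrightarrow> (\<exists>P1 P2. P \<equiv>\<^sub>s Par P1 (Pre (In a) P2)) \<and> (\<exists>P3 P4. P \<equiv>\<^sub>s Par P3 (Pre (Out a) P4))"

end

theory Submission
  imports Defs
begin

lemma occ_scong: "P \<equiv>\<^sub>s Q \<Longrightarrow> occ \<beta> P = occ \<beta> Q"
  by (induction rule: scong.induct) auto

lemma names_occ: "x \<in> names P \<longleftrightarrow> occ (In x) P + occ (Out x) P > 0"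
proof (induction P)
  case (Pre \<alpha> P) then show ?case by (cases \<alpha>) auto
qed auto

lemma sync_scong: "sync a P \<Longrightarrow> P \<equiv>\<^sub>s Q \<Longrightarrow> sync a Q"
  unfolding sync_def by (meson scong.sc_sym scong.sc_trans)

lemma par_move: "P \<equiv>\<^sub>s Par P1 X \<Longrightarrow> Par P R \<equiv>\<^sub>s Par (Par R P1) X"
  by (rule sc_trans[OF sc_comm], rule sc_trans[OF sc_parR], assumption, rule sc_assoc)

lemma par_move2: "P \<equiv>\<^sub>s Par P1 X \<Longrightarrow> Par R P \<equiv>\<^sub>s Par (Par R P1) X"
  by (rule sc_trans[OF sc_parR], assumption, rule sc_assoc)

lemma sync_parL: "sync a P \<Longrightarrow> sync a (Par P R)"
  unfolding sync_def using par_move by blast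

lemma sync_parR: "sync a P \<Longrightarrow> sync a (Par R P)"
  unfolding sync_def using par_move2 by blast

lemma main: "P \<longmapsto> P' \<Longrightarrow> \<exists>a. (\<forall>\<beta>. occ \<beta> P = occ \<beta> P' + (if \<beta> = In a \<or> \<beta> = Out a then 1 else 0)) \<and> sync a P"
proof (induction rule: red.induct)
  case (red_comm \<alpha> P Q)
  show ?case
  proof (cases \<alpha>)
    case (In a)
    have "sync a (Par (Pre \<alpha> P) (Pre (co \<alpha>) Q))"
      unfolding sync_def In by (auto intro: sc_refl sc_comm)
    then show ?thesis using In by (intro exI[of _ a]) auto
  next
    case (Out a)
    have "sync a (Par (Pre \<alpha> P) (Pre (co \<alpha>) Q))"
      unfolding sync_def Out by (auto intro: sc_refl sc_comm)
    then show ?thesis using Out by (intro exI[of _ a]) auto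
  qed
next
  case (red_parL P P' R) then show ?case using sync_parL by fastforce
next
  case (red_parR P P' R) then show ?case using sync_parR by fastforce
next
  case (red_struct P Q Q' P')
  from red_struct.IH obtain a where h: "\<forall>\<beta>. occ \<beta> Q = occ \<beta> Q' + (if \<beta> = In a \<or> \<beta> = Out a then 1 else 0)" and s: "sync a Q" by blast
  have "sync a P" by (rule sync_scong[OF s sc_sym[OF red_struct.hyps(1)]])
  moreover have "\<forall>\<beta>. occ \<beta> P = occ \<beta> P' + (if \<beta> = In a \<or> \<beta> = Out a then 1 else 0)"
  proof
    fix \<beta>
    have "occ \<beta> P = occ \<beta> Q" by (rule occ_scong[OF red_struct.hyps(1)])
    moreover have "occ \<beta> Q' = occ \<beta> P'" by (rule occ_scong[OF red_struct.hyps(3)])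
    ultimately show "occ \<beta> P = occ \<beta> P' + (if \<beta> = In a \<or> \<beta> = Out a then 1 else 0)" using h by simp
  qed
  ultimately show ?case by blast
qed

theorem lemma1:
  fixes P P' :: "'n proc"
  assumes "linear P" and "P \<longmapsto> P'"
  shows "\<exists>a. a \<notin> names P' \<and> names P' \<union> {a} = names P \<and> sync a P"
proof -
  obtain a where occ: "\<And>\<beta>. occ \<beta> P = occ \<beta> P' + (if \<beta> = In a \<or> \<beta> = Out a then 1 else 0)" and s: "sync a P"
    using main[OF assms(2)] by blast
  have l: "occ (In a) P \<le> 1" "occ (Out a) P \<le> 1" using assms(1) unfolding linear_def by auto
  have "a \<notin> names P'" unfolding names_occ using l occ[of "In a"] occ[of "Out a"] by simp
  moreover have "names P' \<union> {a} = names P"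
  proof
    show "names P' \<union> {a} \<subseteq> names P"
    proof
      fix x assume "x \<in> names P' \<union> {a}"
      then show "x \<in> names P" using names_occ[of x P] names_occ[of x P'] occ[of "In x"] occ[of "Out x"]
        by (cases "x = a") auto
    qed
    show "names P \<subseteq> names P' \<union> {a}"
    proof
      fix x assume "x \<in> names P"
      then show "x \<in> names P' \<union> {a}" using names_occ[of x P] names_occ[of x P'] occ[of "In x"] occ[of "Out x"]
        by (cases "x = a") auto
    qed
  qed
  ultimately show ?thesis using s by blast
qed

end
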